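(* Let $P$ be a bounded poset of finite length and $I\subset P$ a proper ideal. Then: (i) $P$ and $\mathrm{Bier}(P,I)$ have the same length $n$. (ii) $\mathrm{Bier}(P,I)$ is graded if and only if $P$ is graded; in that case the rank of an element $[x,y]\neq\hat1$ of $\mathrm{Bier}(P,I)$ is $\mathrm{rank}_P(x)+(n-\mathrm{rank}_P(y))$. (iii) For $[x,y]\in\mathrm{Bier}(P,I)$ one has $[[x,y],\hat1]\cong \mathrm{Bier}([x,y],I\cap[x,y])$, and for $[x',y']\le[x,y]$ in $\mathrm{Bier}(P,I)$ (i.e. $x'\le x<y\le y'$) one has $[[x',y'],[x,y]]\cong [x',x]\times[y,y']^{\mathrm{op}}$, where $[y,y']^{\mathrm{op}}$ is the interval $[y,y']$ of $P$ with the opposite order. (iv) If $P$ is a lattice, then $\mathrm{Bier}(P,I)$ is a lattice.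
   Context: All posets have finite length. A poset is bounded if it has a unique minimum $\hat0$ and maximum $\hat1$; it is graded if it is bounded and all maximal chains have the same length. An ideal of $P$ is a subset $I$ with $x\le y$, $y\in I$ implying $x\in I$; it is proper if $I\neq\emptyset$ and $I\neq P$ (so $\hat0\in I$, $\hat1\notin I$). For a bounded poset $P$ of finite length and a proper ideal $I$, the Bier poset $\mathrm{Bier}(P,I)$ consists of all intervals $[x,y]=\{z\in P: x\le z\le y\}$ of $P$ with $x\in I$ and $y\notin I$, ordered by reversed inclusion ($[x',y']\le[x,y]$ iff $x'\le x<y\le y'$), together with an additional top element $\hat1$. Its minimum is $[\hat0,\hat1]$. *)

theory Defs
  imports Main
begin

definition poset_on :: "'a set \<Rightarrow> ('a \<Rightarrow> 'a \<Rightarrow> bool) \<Rightarrow> bool" where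
  "poset_on S le \<longleftrightarrow> (\<forall>x\<in>S. le x x) \<and>
     (\<forall>x\<in>S. \<forall>y\<in>S. le x y \<and> le y x \<longrightarrow> x = y) \<and>
     (\<forall>x\<in>S. \<forall>y\<in>S. \<forall>z\<in>S. le x y \<and> le y z \<longrightarrow> le x z)"

definition chain_on :: "'a set \<Rightarrow> ('a \<Rightarrow> 'a \<Rightarrow> bool) \<Rightarrow> 'a set \<Rightarrow> bool" where
  "chain_on S le C \<longleftrightarrow> C \<subseteq> S \<and> (\<forall>a\<in>C. \<forall>b\<in>C. le a b \<or> le b a)"

definition maximal_chain_on :: "'a set \<Rightarrow> ('a \<Rightarrow> 'a \<Rightarrow> bool) \<Rightarrow> 'a set \<Rightarrow> bool" where
  "maximal_chain_on S le C \<longleftrightarrow> chain_on S le C \<and> (\<forall>D. chain_on S le D \<and> C \<subseteq> D \<longrightarrow> D = C)"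

definition finite_length :: "'a set \<Rightarrow> ('a \<Rightarrow> 'a \<Rightarrow> bool) \<Rightarrow> bool" where
  "finite_length S le \<longleftrightarrow> (\<exists>n. \<forall>C. chain_on S le C \<longrightarrow> finite C \<and> card C \<le> n)"

definition plength :: "'a set \<Rightarrow> ('a \<Rightarrow> 'a \<Rightarrow> bool) \<Rightarrow> nat" where
  "plength S le = (SUP C \<in> {C. chain_on S le C \<and> finite C}. card C - 1)"

definition bounded_poset :: "'a set \<Rightarrow> ('a \<Rightarrow> 'a \<Rightarrow> bool) \<Rightarrow> bool" where
  "bounded_poset S le \<longleftrightarrow> poset_on S le \<and>
     (\<exists>b\<in>S. \<forall>z\<in>S. le b z) \<and> (\<exists>t\<in>S. \<forall>z\<in>S. le z t)"

definition graded :: "'a set \<Rightarrow> ('a \<Rightarrow> 'a \<Rightarrow> bool) \<Rightarrow> bool" where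
  "graded S le \<longleftrightarrow> bounded_poset S le \<and>
     (\<forall>C D. maximal_chain_on S le C \<and> maximal_chain_on S le D \<longrightarrow> card C = card D)"

definition interval :: "'a set \<Rightarrow> ('a \<Rightarrow> 'a \<Rightarrow> bool) \<Rightarrow> 'a \<Rightarrow> 'a \<Rightarrow> 'a set" where
  "interval S le a b = {z \<in> S. le a z \<and> le z b}"

definition prank :: "'a set \<Rightarrow> ('a \<Rightarrow> 'a \<Rightarrow> bool) \<Rightarrow> 'a \<Rightarrow> nat" where
  "prank S le x = plength {z \<in> S. le z x} le"

definition proper_ideal :: "'a set \<Rightarrow> ('a \<Rightarrow> 'a \<Rightarrow> bool) \<Rightarrow> 'a set \<Rightarrow> bool" where
  "proper_ideal S le I \<longleftrightarrow> I \<subseteq> S \<and> (\<forall>x\<in>S. \<forall>y\<in>I. le x y \<longrightarrow> x \<in> I) \<and> I \<noteq> {} \<and> I \<noteq> S"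

text \<open>Bier poset: the interval [x,y] (x in I, y not in I, x \<le> y) is represented by
  Some (x,y) (an interval determines its endpoints); the extra top element is None.
  Order: reversed inclusion, i.e. [x',y'] \<le> [x,y] iff x' \<le> x and y \<le> y'.\<close>
definition bier_carrier :: "'a set \<Rightarrow> ('a \<Rightarrow> 'a \<Rightarrow> bool) \<Rightarrow> 'a set \<Rightarrow> ('a \<times> 'a) option set" where
  "bier_carrier S le I = insert None {Some (x, y) | x y. x \<in> I \<and> y \<in> S - I \<and> le x y}"

fun bier_le :: "('a \<Rightarrow> 'a \<Rightarrow> bool) \<Rightarrow> ('a \<times> 'a) option \<Rightarrow> ('a \<times> 'a) option \<Rightarrow> bool" where
  "bier_le le _ None = True"
| "bier_le le None (Some _) = False"
| "bier_le le (Some (x', y')) (Some (x, y)) = (le x' x \<and> le y y')"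

definition poset_iso :: "'a set \<Rightarrow> ('a \<Rightarrow> 'a \<Rightarrow> bool) \<Rightarrow> 'b set \<Rightarrow> ('b \<Rightarrow> 'b \<Rightarrow> bool) \<Rightarrow> bool" where
  "poset_iso S le T le' \<longleftrightarrow>
     (\<exists>f. bij_betw f S T \<and> (\<forall>a\<in>S. \<forall>b\<in>S. le a b \<longleftrightarrow> le' (f a) (f b)))"

definition prod_le :: "('a \<Rightarrow> 'a \<Rightarrow> bool) \<Rightarrow> ('b \<Rightarrow> 'b \<Rightarrow> bool) \<Rightarrow> 'a \<times> 'b \<Rightarrow> 'a \<times> 'b \<Rightarrow> bool" where
  "prod_le le1 le2 p q \<longleftrightarrow> le1 (fst p) (fst q) \<and> le2 (snd p) (snd q)"

definition is_lattice :: "'a set \<Rightarrow> ('a \<Rightarrow> 'a \<Rightarrow> bool) \<Rightarrow> bool" where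
  "is_lattice S le \<longleftrightarrow> (\<forall>a\<in>S. \<forall>b\<in>S.
     (\<exists>s\<in>S. le a s \<and> le b s \<and> (\<forall>u\<in>S. le a u \<and> le b u \<longrightarrow> le s u)) \<and>
     (\<exists>i\<in>S. le i a \<and> le i b \<and> (\<forall>u\<in>S. le u a \<and> le u b \<longrightarrow> le u i)))"

end

theory Submission
  imports Defs
begin


lemma pl_bound:
  assumes "finite_length S le"
  obtains n where "\<And>C. chain_on S le C \<Longrightarrow> finite C \<and> card C \<le> n"
  using assms unfolding finite_length_def by blast

lemma pl_upper:
  assumes "finite_length S le" "chain_on S le C"
  shows "card C - 1 \<le> plength S le"
proof -
  obtain n where n: "\<And>C. chain_on S le C \<Longrightarrow> finite C \<and> card C \<le> n"
    using pl_bound[OF assms(1)] by blast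
  have bdd: "bdd_above ((\<lambda>C. card C - 1) ` {C. chain_on S le C \<and> finite C})"
    by (rule bdd_aboveI[of _ n]) (use n in force)
  show ?thesis unfolding plength_def
    by (rule cSUP_upper2[OF bdd, of C]) (use n assms(2) in auto)
qed

lemma pl_attained:
  assumes "finite_length S le"
  obtains C where "chain_on S le C" "finite C" "plength S le = card C - 1"
proof -
  obtain n where n: "\<And>C. chain_on S le C \<Longrightarrow> finite C \<and> card C \<le> n"
    using pl_bound[OF assms(1)] by blast
  let ?V = "(\<lambda>C. card C - 1) ` {C. chain_on S le C \<and> finite C}"
  have fin: "finite ?V" by (rule finite_subset[of _ "{..n}"]) (use n in force, simp)
  have ne: "?V \<noteq> {}" using chain_on_def[of S le "{}"] by auto
  have "Sup ?V \<in> ?V" using cSup_eq_Max[OF fin ne] Max_in[OF fin ne] by simp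
  then show ?thesis using that unfolding plength_def by auto
qed

lemma fl_subset:
  assumes "finite_length S le" "A \<subseteq> S" shows "finite_length A le"
proof -
  obtain n where n: "\<And>C. chain_on S le C \<Longrightarrow> finite C \<and> card C \<le> n" using pl_bound[OF assms(1)] by blast
  have "chain_on A le C \<Longrightarrow> chain_on S le C" for C using assms(2) unfolding chain_on_def by blast
  then show ?thesis unfolding finite_length_def using n by blast
qed

lemma maximal_insert:
  assumes "maximal_chain_on S le D" "x \<in> S" "le x x" "\<forall>d\<in>D. le x d \<or> le d x"
  shows "x \<in> D"
proof -
  have "chain_on S le (insert x D)" using assms unfolding maximal_chain_on_def chain_on_def by auto
  then show ?thesis using assms(1) unfolding maximal_chain_on_def by blast
qed

lemma maxcard_maximal:
  assumes "finite_length S le" "chain_on S le C" "card C - 1 = plength S le" "card C \<ge> 1"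
  shows "maximal_chain_on S le C"
  unfolding maximal_chain_on_def
proof (intro conjI allI impI assms(2))
  fix D assume D: "chain_on S le D \<and> C \<subseteq> D"
  obtain n where n: "\<And>C. chain_on S le C \<Longrightarrow> finite C \<and> card C \<le> n"
    using pl_bound[OF assms(1)] by blast
  show "D = C"
  proof (rule ccontr)
    assume "D \<noteq> C"
    then have "C \<subset> D" using D by auto
    then have "card C < card D" using n D by (meson psubset_card_mono)
    then have "plength S le < card D - 1" using assms by linarith
    then show False using pl_upper[OF assms(1)] D by fastforce
  qed
qed

lemma ball2_sub: "\<forall>p\<in>E. \<forall>q\<in>E. P p q \<Longrightarrow> F \<subseteq> E \<Longrightarrow> \<forall>p\<in>F. \<forall>q\<in>F. P p q" by blast
lemma ball3_sub: "\<forall>p\<in>E. \<forall>q\<in>E. \<forall>r\<in>E. P p q r \<Longrightarrow> F \<subseteq> E \<Longrightarrow> \<forall>p\<in>F. \<forall>q\<in>F. \<forall>r\<in>F. P p q r" by blast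

lemma chain_max:
  assumes "finite E" "E \<noteq> {}" "\<forall>p\<in>E. \<forall>q\<in>E. R p q \<or> R q p"
    "\<forall>p\<in>E. \<forall>q\<in>E. \<forall>r\<in>E. R p q \<longrightarrow> R q r \<longrightarrow> R p r"
  shows "\<exists>m\<in>E. \<forall>q\<in>E. R q m"
  using assms
proof (induction E rule: finite_ne_induct)
  case (singleton x) then have "R x x" by blast then show ?case by blast
next
  case (insert x F)
  have t: "\<forall>p\<in>F. \<forall>q\<in>F. R p q \<or> R q p" using insert.prems(1) by simp
  have tr: "\<forall>p\<in>F. \<forall>q\<in>F. \<forall>r\<in>F. R p q \<longrightarrow> R q r \<longrightarrow> R p r"
  proof (intro ballI impI)
    fix p q r assume "p \<in> F" "q \<in> F" "r \<in> F" "R p q" "R q r"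
    then show "R p r" using insert.prems(2)[rule_format, of p q r] by blast
  qed
  obtain m where m: "m \<in> F" "\<forall>q\<in>F. R q m" using insert.IH[OF t tr] by blast
  have xx: "R x x" using insert.prems(1)[rule_format, of x x] by blast
  show ?case
  proof (cases "R m x")
    case True
    have "\<forall>q\<in>insert x F. R q x"
    proof
      fix q assume q: "q \<in> insert x F"
      show "R q x"
      proof (cases "q = x")
        case True then show ?thesis using xx by simp
      next
        case False
        then have "q \<in> F" using q by simp
        then have "R q m" using m by blast
        then show ?thesis using insert.prems(2)[rule_format, of q m x] True \<open>q \<in> F\<close> m(1) by blast
      qed
    qed
    then show ?thesis by blast
  next
    case False
    then have "R x m" using insert.prems(1)[rule_format, of x m] m(1) by blast
    then have "\<forall>q\<in>insert x F. R q m" using m by blast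
    then show ?thesis using m(1) by blast
  qed
qed

lemma prod_chain_card:
  fixes E :: "('a \<times> 'b) set"
  assumes "finite E" "E \<noteq> {}"
    and "\<forall>p\<in>E. \<forall>q\<in>E. prod_le le1 le2 p q \<or> prod_le le1 le2 q p"
    and "\<forall>a\<in>fst`E. \<forall>b\<in>fst`E. le1 a b \<longrightarrow> le1 b a \<longrightarrow> a = b"
    and "\<forall>a\<in>snd`E. \<forall>b\<in>snd`E. le2 a b \<longrightarrow> le2 b a \<longrightarrow> a = b"
    and "\<forall>a\<in>fst`E. \<forall>b\<in>fst`E. \<forall>c\<in>fst`E. le1 a b \<longrightarrow> le1 b c \<longrightarrow> le1 a c"
    and "\<forall>a\<in>snd`E. \<forall>b\<in>snd`E. \<forall>c\<in>snd`E. le2 a b \<longrightarrow> le2 b c \<longrightarrow> le2 a c"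
  shows "card E + 1 \<le> card (fst`E) + card (snd`E)"
  using assms
proof (induction "card E" arbitrary: E rule: less_induct)
  case less
  have tr: "\<forall>p\<in>E. \<forall>q\<in>E. \<forall>r\<in>E. prod_le le1 le2 p q \<longrightarrow> prod_le le1 le2 q r \<longrightarrow> prod_le le1 le2 p r"
    using less.prems(6,7) unfolding prod_le_def by (meson image_eqI)
  obtain m where m: "m \<in> E" "\<forall>q\<in>E. prod_le le1 le2 q m"
    using chain_max[OF less.prems(1,2,3) tr] by blast
  show ?case
  proof (cases "E = {m}")
    case True then show ?thesis by simp
  next
    case False
    define F where "F = E - {m}"
    have F: "F \<noteq> {}" "finite F" "card F < card E" "F \<subseteq> E"
      using False m less.prems(1) card_Diff1_less[OF less.prems(1) m(1)] unfolding F_def by auto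
    have sub1: "fst ` F \<subseteq> fst ` E" and sub2: "snd ` F \<subseteq> snd ` E" using F by auto
    have IH: "card F + 1 \<le> card (fst`F) + card (snd`F)"
    proof (rule less.hyps[OF F(3) F(2) F(1)])
      show "\<forall>p\<in>F. \<forall>q\<in>F. prod_le le1 le2 p q \<or> prod_le le1 le2 q p" by (rule ball2_sub[OF less.prems(3) F(4)])
      show "\<forall>a\<in>fst`F. \<forall>b\<in>fst`F. le1 a b \<longrightarrow> le1 b a \<longrightarrow> a = b" by (rule ball2_sub[OF less.prems(4) sub1])
      show "\<forall>a\<in>snd`F. \<forall>b\<in>snd`F. le2 a b \<longrightarrow> le2 b a \<longrightarrow> a = b" by (rule ball2_sub[OF less.prems(5) sub2])
      show "\<forall>a\<in>fst`F. \<forall>b\<in>fst`F. \<forall>c\<in>fst`F. le1 a b \<longrightarrow> le1 b c \<longrightarrow> le1 a c" by (rule ball3_sub[OF less.prems(6) sub1])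
      show "\<forall>a\<in>snd`F. \<forall>b\<in>snd`F. \<forall>c\<in>snd`F. le2 a b \<longrightarrow> le2 b c \<longrightarrow> le2 a c" by (rule ball3_sub[OF less.prems(7) sub2])
    qed
    have cE: "card E = card F + 1" using card.remove[OF less.prems(1) m(1)] unfolding F_def by simp
    have E1: "fst ` E = insert (fst m) (fst ` F)" and E2: "snd ` E = insert (snd m) (snd ` F)"
      using m unfolding F_def by auto
    have new: "fst m \<notin> fst ` F \<or> snd m \<notin> snd ` F"
    proof (rule ccontr)
      assume "\<not> ?thesis"
      then obtain q1 q2 where q: "q1 \<in> F" "q2 \<in> F" "fst q1 = fst m" "snd q2 = snd m" by force
      have "q1 \<in> E" "q2 \<in> E" "q1 \<noteq> m" "q2 \<noteq> m" using q unfolding F_def by auto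
      have r1: "le2 (snd q1) (snd m)" and r2: "le1 (fst q2) (fst m)"
        using m(2) \<open>q1 \<in> E\<close> \<open>q2 \<in> E\<close> unfolding prod_le_def by auto
      from less.prems(3) \<open>q1 \<in> E\<close> \<open>q2 \<in> E\<close> have "prod_le le1 le2 q1 q2 \<or> prod_le le1 le2 q2 q1" by blast
      then show False
      proof
        assume "prod_le le1 le2 q1 q2"
        then have "le1 (fst m) (fst q2)" using q unfolding prod_le_def by simp
        then have "fst q2 = fst m" using less.prems(4) r2 \<open>q2 \<in> E\<close> m(1) by blast
        then have "q2 = m" using q by (simp add: prod_eq_iff)
        then show False using \<open>q2 \<noteq> m\<close> by simp
      next
        assume "prod_le le1 le2 q2 q1"
        then have "le2 (snd m) (snd q1)" using q unfolding prod_le_def by simp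
        then have "snd q1 = snd m" using less.prems(5) r1 \<open>q1 \<in> E\<close> m(1) by blast
        then have "q1 = m" using q by (simp add: prod_eq_iff)
        then show False using \<open>q1 \<noteq> m\<close> by simp
      qed
    qed
    have f1: "finite (fst ` F)" "finite (snd ` F)" using F by auto
    show ?thesis using new IH cE E1 E2 card_insert_if[OF f1(1), of "fst m"] card_insert_if[OF f1(2), of "snd m"]
      by auto
  qed
qed


lemma prod_chain_card_eq:
  fixes E :: "('a \<times> 'b) set"
  assumes "finite E" "E \<noteq> {}"
    and "\<forall>p\<in>E. \<forall>q\<in>E. prod_le le1 le2 p q \<or> prod_le le1 le2 q p"
    and "\<forall>a\<in>fst`E. \<forall>b\<in>fst`E. le1 a b \<longrightarrow> le1 b a \<longrightarrow> a = b"
    and "\<forall>a\<in>snd`E. \<forall>b\<in>snd`E. le2 a b \<longrightarrow> le2 b a \<longrightarrow> a = b"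
    and "\<forall>a\<in>fst`E. \<forall>b\<in>fst`E. \<forall>c\<in>fst`E. le1 a b \<longrightarrow> le1 b c \<longrightarrow> le1 a c"
    and "\<forall>a\<in>snd`E. \<forall>b\<in>snd`E. \<forall>c\<in>snd`E. le2 a b \<longrightarrow> le2 b c \<longrightarrow> le2 a c"
    and "\<forall>p\<in>E. \<forall>q\<in>E. prod_le le1 le2 p q \<and> p \<noteq> q \<and>
            (\<forall>z\<in>E. prod_le le1 le2 p z \<and> prod_le le1 le2 z q \<longrightarrow> z = p \<or> z = q)
            \<longrightarrow> fst p = fst q \<or> snd p = snd q"
  shows "card (fst`E) + card (snd`E) \<le> card E + 1"
  using assms
proof (induction "card E" arbitrary: E rule: less_induct)
  case less
  have tr: "\<forall>p\<in>E. \<forall>q\<in>E. \<forall>r\<in>E. prod_le le1 le2 p q \<longrightarrow> prod_le le1 le2 q r \<longrightarrow> prod_le le1 le2 p r"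
    using less.prems(6,7) unfolding prod_le_def by (meson image_eqI)
  have as: "\<forall>p\<in>E. \<forall>q\<in>E. prod_le le1 le2 p q \<longrightarrow> prod_le le1 le2 q p \<longrightarrow> p = q"
    using less.prems(4,5) unfolding prod_le_def by (meson image_eqI prod_eq_iff)
  obtain m where m: "m \<in> E" "\<forall>q\<in>E. prod_le le1 le2 q m"
    using chain_max[OF less.prems(1,2,3) tr] by blast
  show ?case
  proof (cases "E = {m}")
    case True then show ?thesis by simp
  next
    case False
    define F where "F = E - {m}"
    have F: "F \<noteq> {}" "finite F" "card F < card E" "F \<subseteq> E"
      using False m less.prems(1) card_Diff1_less[OF less.prems(1) m(1)] unfolding F_def by auto
    have sub1: "fst ` F \<subseteq> fst ` E" and sub2: "snd ` F \<subseteq> snd ` E" using F by auto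
    have tF: "\<forall>p\<in>F. \<forall>q\<in>F. prod_le le1 le2 p q \<or> prod_le le1 le2 q p" by (rule ball2_sub[OF less.prems(3) F(4)])
    have trF: "\<forall>p\<in>F. \<forall>q\<in>F. \<forall>r\<in>F. prod_le le1 le2 p q \<longrightarrow> prod_le le1 le2 q r \<longrightarrow> prod_le le1 le2 p r"
      by (rule ball3_sub[OF tr F(4)])
    have IH: "card (fst`F) + card (snd`F) \<le> card F + 1"
    proof (rule less.hyps[OF F(3) F(2) F(1) tF])
      show "\<forall>a\<in>fst`F. \<forall>b\<in>fst`F. le1 a b \<longrightarrow> le1 b a \<longrightarrow> a = b" by (rule ball2_sub[OF less.prems(4) sub1])
      show "\<forall>a\<in>snd`F. \<forall>b\<in>snd`F. le2 a b \<longrightarrow> le2 b a \<longrightarrow> a = b" by (rule ball2_sub[OF less.prems(5) sub2])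
      show "\<forall>a\<in>fst`F. \<forall>b\<in>fst`F. \<forall>c\<in>fst`F. le1 a b \<longrightarrow> le1 b c \<longrightarrow> le1 a c" by (rule ball3_sub[OF less.prems(6) sub1])
      show "\<forall>a\<in>snd`F. \<forall>b\<in>snd`F. \<forall>c\<in>snd`F. le2 a b \<longrightarrow> le2 b c \<longrightarrow> le2 a c" by (rule ball3_sub[OF less.prems(7) sub2])
      show "\<forall>p\<in>F. \<forall>q\<in>F. prod_le le1 le2 p q \<and> p \<noteq> q \<and>
            (\<forall>z\<in>F. prod_le le1 le2 p z \<and> prod_le le1 le2 z q \<longrightarrow> z = p \<or> z = q)
            \<longrightarrow> fst p = fst q \<or> snd p = snd q"
      proof (intro ballI impI)
        fix p q assume pq: "p \<in> F" "q \<in> F" and h: "prod_le le1 le2 p q \<and> p \<noteq> q \<and>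
            (\<forall>z\<in>F. prod_le le1 le2 p z \<and> prod_le le1 le2 z q \<longrightarrow> z = p \<or> z = q)"
        have "\<forall>z\<in>E. prod_le le1 le2 p z \<and> prod_le le1 le2 z q \<longrightarrow> z = p \<or> z = q"
        proof (intro ballI impI)
          fix z assume z: "z \<in> E" "prod_le le1 le2 p z \<and> prod_le le1 le2 z q"
          show "z = p \<or> z = q"
          proof (cases "z = m")
            case True
            then have "z = q" using as m z pq F(4) by blast
            then show ?thesis by simp
          next
            case False then show ?thesis using h z unfolding F_def by blast
          qed
        qed
        then show "fst p = fst q \<or> snd p = snd q" using less.prems(8) pq F(4) h by blast
      qed
    qed
    obtain p where p: "p \<in> F" "\<forall>q\<in>F. prod_le le1 le2 q p"
      using chain_max[OF F(2,1) tF trF] by blast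
    have "p \<noteq> m" using p unfolding F_def by auto
    have cons: "\<forall>z\<in>E. prod_le le1 le2 p z \<and> prod_le le1 le2 z m \<longrightarrow> z = p \<or> z = m"
    proof (intro ballI impI)
      fix z assume z: "z \<in> E" "prod_le le1 le2 p z \<and> prod_le le1 le2 z m"
      show "z = p \<or> z = m"
      proof (cases "z = m")
        case False
        then have "z \<in> F" using z unfolding F_def by auto
        then have "z = p" using as p z F(4) by blast
        then show ?thesis by simp
      qed simp
    qed
    have "fst p = fst m \<or> snd p = snd m"
      using less.prems(8) p(1) F(4) m \<open>p \<noteq> m\<close> cons by blast
    then have old: "fst m \<in> fst ` F \<or> snd m \<in> snd ` F" using p(1) by (metis image_eqI)
    have cE: "card E = card F + 1" using card.remove[OF less.prems(1) m(1)] unfolding F_def by simp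
    have E1: "fst ` E = insert (fst m) (fst ` F)" and E2: "snd ` E = insert (snd m) (snd ` F)"
      using m unfolding F_def by auto
    have f1: "finite (fst ` F)" "finite (snd ` F)" using F by auto
    show ?thesis using old IH cE E1 E2 card_insert_if[OF f1(1), of "fst m"] card_insert_if[OF f1(2), of "snd m"]
      by auto
  qed
qed



locale bier_ctx =
  fixes S :: "'a set" and le :: "'a \<Rightarrow> 'a \<Rightarrow> bool" and I :: "'a set"
  assumes bnd: "bounded_poset S le" and fl: "finite_length S le" and ideal: "proper_ideal S le I"
begin

abbreviation B where "B \<equiv> bier_carrier S le I"
abbreviation bl where "bl \<equiv> bier_le le"
abbreviation R where "R \<equiv> prod_le le (\<lambda>a b. le b a)"

lemma p_refl: "x \<in> S \<Longrightarrow> le x x"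
  using bnd unfolding bounded_poset_def poset_on_def by blast
lemma p_antisym: "x \<in> S \<Longrightarrow> y \<in> S \<Longrightarrow> le x y \<Longrightarrow> le y x \<Longrightarrow> x = y"
  using bnd unfolding bounded_poset_def poset_on_def by blast
lemma p_trans: "x \<in> S \<Longrightarrow> y \<in> S \<Longrightarrow> z \<in> S \<Longrightarrow> le x y \<Longrightarrow> le y z \<Longrightarrow> le x z"
  using bnd unfolding bounded_poset_def poset_on_def by blast
lemma I_sub: "I \<subseteq> S" using ideal unfolding proper_ideal_def by blast
lemma I_down: "x \<in> S \<Longrightarrow> y \<in> I \<Longrightarrow> le x y \<Longrightarrow> x \<in> I"
  using ideal unfolding proper_ideal_def by blast

definition zero where "zero = (SOME b. b \<in> S \<and> (\<forall>z\<in>S. le b z))"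
definition one where "one = (SOME t. t \<in> S \<and> (\<forall>z\<in>S. le z t))"

lemma zero: "zero \<in> S" "\<And>z. z \<in> S \<Longrightarrow> le zero z"
proof -
  have "\<exists>b. b \<in> S \<and> (\<forall>z\<in>S. le b z)" using bnd unfolding bounded_poset_def by blast
  from someI_ex[OF this] show "zero \<in> S" "\<And>z. z \<in> S \<Longrightarrow> le zero z" unfolding zero_def by auto
qed
lemma one: "one \<in> S" "\<And>z. z \<in> S \<Longrightarrow> le z one"
proof -
  have "\<exists>b. b \<in> S \<and> (\<forall>z\<in>S. le z b)" using bnd unfolding bounded_poset_def by blast
  from someI_ex[OF this] show "one \<in> S" "\<And>z. z \<in> S \<Longrightarrow> le z one" unfolding one_def by auto
qed
lemma zero_I: "zero \<in> I"
proof -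
  obtain y where "y \<in> I" using ideal unfolding proper_ideal_def by blast
  then show ?thesis using I_down zero I_sub by blast
qed
lemma one_nI: "one \<notin> I"
proof
  assume "one \<in> I"
  then have "S \<subseteq> I" using I_down one by blast
  then show False using ideal unfolding proper_ideal_def by blast
qed

lemma B_Some: "Some (a, b) \<in> B \<longleftrightarrow> a \<in> I \<and> b \<in> S \<and> b \<notin> I \<and> le a b"
  unfolding bier_carrier_def by auto
lemma None_B: "None \<in> B" unfolding bier_carrier_def by auto
lemma B_Some': "Some p \<in> B \<longleftrightarrow> fst p \<in> I \<and> snd p \<in> S \<and> snd p \<notin> I \<and> le (fst p) (snd p)"
  using B_Some[of "fst p" "snd p"] by simp
lemma B_SomeS: "Some p \<in> B \<longleftrightarrow> fst p \<in> I \<and> fst p \<in> S \<and> snd p \<in> S \<and> snd p \<notin> I \<and> le (fst p) (snd p)"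
  using B_Some' I_sub by blast
lemma bl_None[simp]: "bl z None" by (cases z) auto
lemma bl_Some: "bl (Some p) (Some q) = R p q"
  by (cases p; cases q) (simp add: prod_le_def)
lemma bl_None_Some: "\<not> bl None (Some p)" by (cases p) simp

lemma as_on: "A \<subseteq> S \<Longrightarrow> \<forall>a\<in>A. \<forall>b\<in>A. le a b \<longrightarrow> le b a \<longrightarrow> a = b"
  by (meson p_antisym subsetD)
lemma tr_on: "A \<subseteq> S \<Longrightarrow> \<forall>a\<in>A. \<forall>b\<in>A. \<forall>c\<in>A. le a b \<longrightarrow> le b c \<longrightarrow> le a c"
  by (meson p_trans subsetD)

definition Sm :: "('a \<times> 'a) option set \<Rightarrow> ('a \<times> 'a) set" where "Sm D = {p. Some p \<in> D}"

lemma Sm_props: "D \<subseteq> B \<Longrightarrow> p \<in> Sm D \<Longrightarrow> fst p \<in> I \<and> fst p \<in> S \<and> snd p \<in> S \<and> snd p \<notin> I \<and> le (fst p) (snd p)"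
  unfolding Sm_def using B_Some' I_sub by blast

lemma D_split: "D = (if None \<in> D then insert None (Some ` Sm D) else Some ` Sm D)"
proof -
  have "D - {None} = Some ` Sm D"
  proof
    show "D - {None} \<subseteq> Some ` Sm D"
    proof
      fix z assume z: "z \<in> D - {None}"
      then obtain p where "z = Some p" by (cases z) auto
      then show "z \<in> Some ` Sm D" using z unfolding Sm_def by auto
    qed
    show "Some ` Sm D \<subseteq> D - {None}" unfolding Sm_def by auto
  qed
  then show ?thesis by auto
qed

lemma Sm_tot: "chain_on B bl D \<Longrightarrow> \<forall>p\<in>Sm D. \<forall>q\<in>Sm D. R p q \<or> R q p"
  unfolding chain_on_def Sm_def by (auto simp: bl_Some[symmetric])

lemma Sm_hyps:
  assumes "D \<subseteq> B"
  shows "\<forall>a\<in>fst`Sm D. \<forall>b\<in>fst`Sm D. le a b \<longrightarrow> le b a \<longrightarrow> a = b"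
    "\<forall>a\<in>snd`Sm D. \<forall>b\<in>snd`Sm D. (\<lambda>a b. le b a) a b \<longrightarrow> (\<lambda>a b. le b a) b a \<longrightarrow> a = b"
    "\<forall>a\<in>fst`Sm D. \<forall>b\<in>fst`Sm D. \<forall>c\<in>fst`Sm D. le a b \<longrightarrow> le b c \<longrightarrow> le a c"
    "\<forall>a\<in>snd`Sm D. \<forall>b\<in>snd`Sm D. \<forall>c\<in>snd`Sm D. (\<lambda>a b. le b a) a b \<longrightarrow> (\<lambda>a b. le b a) b c \<longrightarrow> (\<lambda>a b. le b a) a c"
proof -
  have fS: "fst ` Sm D \<subseteq> S" and sS: "snd ` Sm D \<subseteq> S" using Sm_props[OF assms] by auto
  show "\<forall>a\<in>fst`Sm D. \<forall>b\<in>fst`Sm D. le a b \<longrightarrow> le b a \<longrightarrow> a = b" by (rule as_on[OF fS])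
  show "\<forall>a\<in>snd`Sm D. \<forall>b\<in>snd`Sm D. (\<lambda>a b. le b a) a b \<longrightarrow> (\<lambda>a b. le b a) b a \<longrightarrow> a = b"
    using as_on[OF sS] by (meson)
  show "\<forall>a\<in>fst`Sm D. \<forall>b\<in>fst`Sm D. \<forall>c\<in>fst`Sm D. le a b \<longrightarrow> le b c \<longrightarrow> le a c" by (rule tr_on[OF fS])
  show "\<forall>a\<in>snd`Sm D. \<forall>b\<in>snd`Sm D. \<forall>c\<in>snd`Sm D. (\<lambda>a b. le b a) a b \<longrightarrow> (\<lambda>a b. le b a) b c \<longrightarrow> (\<lambda>a b. le b a) a c"
    using tr_on[OF sS] by (meson)
qed

lemma Psi_chain:
  assumes "chain_on B bl D"
  shows "chain_on S le (fst ` Sm D \<union> snd ` Sm D)"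
proof -
  have DB: "D \<subseteq> B" using assms unfolding chain_on_def by blast
  note P = Sm_props[OF DB]
  note T = Sm_tot[OF assms]
  have "le a b \<or> le b a" if a: "a \<in> fst ` Sm D \<union> snd ` Sm D" and b: "b \<in> fst ` Sm D \<union> snd ` Sm D" for a b
  proof -
    have fs: "le (fst p) (snd q)" if "p \<in> Sm D" "q \<in> Sm D" for p q
    proof -
      from T that have "R p q \<or> R q p" by blast
      then show ?thesis
      proof
        assume "R p q" then show ?thesis using P[OF that(1)] P[OF that(2)] p_trans unfolding prod_le_def by blast
      next
        assume "R q p" then show ?thesis using P[OF that(1)] P[OF that(2)] p_trans unfolding prod_le_def by blast
      qed
    qed
    show ?thesis using a b T fs unfolding prod_le_def by blast
  qed
  moreover have "fst ` Sm D \<union> snd ` Sm D \<subseteq> S" using P by blast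
  ultimately show ?thesis unfolding chain_on_def by blast
qed

lemma Sm_finite:
  assumes "chain_on B bl D" shows "finite (Sm D)" "finite D"
proof -
  obtain n where n: "\<And>C. chain_on S le C \<Longrightarrow> finite C \<and> card C \<le> n" using pl_bound[OF fl] by blast
  have "finite (fst ` Sm D \<union> snd ` Sm D)" using n Psi_chain[OF assms] by blast
  then have "finite (fst ` Sm D \<times> snd ` Sm D)" by blast
  moreover have "Sm D \<subseteq> fst ` Sm D \<times> snd ` Sm D" by force
  ultimately show f: "finite (Sm D)" by (rule finite_subset[rotated])
  show "finite D" using D_split[of D] f by (metis finite.insertI finite_imageI)
qed

lemma card_D: assumes f: "finite (Sm D)" shows "card D \<le> card (Sm D) + 1"
proof -
  have c: "card (Some ` Sm D) = card (Sm D)" by (rule card_image) simp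
  have f2: "finite (Some ` Sm D)" using f by simp
  show ?thesis
  proof (cases "None \<in> D")
    case True
    then have "D = insert None (Some ` Sm D)" using D_split[of D] by simp
    then have "card D = card (insert None (Some ` Sm D))" by simp
    also have "\<dots> \<le> Suc (card (Some ` Sm D))" using card_insert_if[OF f2, of None] by simp
    finally show ?thesis using c by simp
  next
    case False
    then have "D = Some ` Sm D" using D_split[of D] by simp
    then show ?thesis using c by simp
  qed
qed


lemma le_one_notI: "c \<in> S \<Longrightarrow> c \<notin> I \<Longrightarrow> le c one" using one by blast

lemma finite_length_B: "finite_length B bl"
proof -
  obtain n where n: "\<And>C. chain_on S le C \<Longrightarrow> finite C \<and> card C \<le> n" using pl_bound[OF fl] by blast
  have "finite D \<and> card D \<le> n * n + 1" if D: "chain_on B bl D" for D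
  proof -
    have c: "finite (fst ` Sm D \<union> snd ` Sm D)" "card (fst ` Sm D \<union> snd ` Sm D) \<le> n"
      using n Psi_chain[OF D] by blast+
    have f1: "finite (fst ` Sm D)" "finite (snd ` Sm D)" using c by auto
    have "card (fst ` Sm D) \<le> n" "card (snd ` Sm D) \<le> n"
      using c card_mono[OF c(1)] by (meson le_trans sup_ge1 sup_ge2)+
    then have "card (fst ` Sm D \<times> snd ` Sm D) \<le> n * n" by (simp add: card_cartesian_product mult_le_mono)
    moreover have "Sm D \<subseteq> fst ` Sm D \<times> snd ` Sm D" by force
    ultimately have "card (Sm D) \<le> n * n" using f1 card_mono by (metis finite_SigmaI le_trans)
    then show ?thesis using card_D Sm_finite[OF D] by fastforce
  qed
  then show ?thesis unfolding finite_length_def by blast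
qed

lemma disj_fs: assumes "D \<subseteq> B" shows "fst ` Sm D \<inter> snd ` Sm D = {}"
proof -
  have False if a1: "a \<in> fst ` Sm D" "a \<in> snd ` Sm D" for a
  proof -
    obtain p q where "p \<in> Sm D" "a = fst p" "q \<in> Sm D" "a = snd q" using a1 by blast
    then show False using Sm_props[OF assms, of p] Sm_props[OF assms, of q] by simp
  qed
  then show ?thesis by blast
qed

lemma card_Psi:
  assumes D: "chain_on B bl D" and ne: "Sm D \<noteq> {}"
  shows "card D \<le> card (fst ` Sm D \<union> snd ` Sm D)"
proof -
  have DB: "D \<subseteq> B" using D unfolding chain_on_def by blast
  have f: "finite (Sm D)" using Sm_finite[OF D] by blast
  have "card (Sm D) + 1 \<le> card (fst ` Sm D) + card (snd ` Sm D)"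
    by (rule prod_chain_card[OF f ne Sm_tot[OF D] Sm_hyps[OF DB]])
  also have "\<dots> = card (fst ` Sm D \<union> snd ` Sm D)"
    using disj_fs[OF DB] f by (simp add: card_Un_disjoint)
  finally show ?thesis using card_D[OF f] by linarith
qed

lemma plength_B_le: "plength B bl \<le> plength S le"
proof -
  obtain D where D: "chain_on B bl D" "finite D" "plength B bl = card D - 1"
    using pl_attained[OF finite_length_B] by blast
  show ?thesis
  proof (cases "Sm D = {}")
    case True
    then have "D \<subseteq> {None}" using D_split[of D] by (auto split: if_splits)
    then have "card D \<le> card {None}" using card_mono[of "{None}" D] by simp
    then have "card D \<le> 1" by simp
    then show ?thesis using D by simp
  next
    case False
    show ?thesis using card_Psi[OF D(1) False] pl_upper[OF fl Psi_chain[OF D(1)]] D(3) by linarith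
  qed
qed

definition mx :: "'a set \<Rightarrow> 'a" where "mx C = (SOME m. m \<in> C \<inter> I \<and> (\<forall>c\<in>C \<inter> I. le c m))"

lemma mx:
  assumes "chain_on S le C" "finite C" "zero \<in> C"
  shows "mx C \<in> C \<inter> I" "\<And>c. c \<in> C \<inter> I \<Longrightarrow> le c (mx C)"
proof -
  have CS: "C \<subseteq> S" using assms unfolding chain_on_def by blast
  have "\<exists>m\<in>C \<inter> I. \<forall>q\<in>C \<inter> I. le q m"
    apply (rule chain_max)
    using assms zero_I CS p_trans unfolding chain_on_def by (auto, blast)
  then have "\<exists>m. m \<in> C \<inter> I \<and> (\<forall>c\<in>C \<inter> I. le c m)" by blast
  from someI_ex[OF this] show "mx C \<in> C \<inter> I" "\<And>c. c \<in> C \<inter> I \<Longrightarrow> le c (mx C)"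
    unfolding mx_def by auto
qed

definition Phi :: "'a set \<Rightarrow> ('a \<times> 'a) option set" where
  "Phi C = insert None (Some ` ((\<lambda>c. (c, one)) ` (C \<inter> I) \<union> (\<lambda>c. (mx C, c)) ` (C - I)))"

lemma Phi_chain:
  assumes C: "chain_on S le C" "finite C" "zero \<in> C" "one \<in> C"
  shows "chain_on B bl (Phi C)" "finite (Phi C)"
    "Sm (Phi C) = (\<lambda>c. (c, one)) ` (C \<inter> I) \<union> (\<lambda>c. (mx C, c)) ` (C - I)"
proof -
  have CS: "C \<subseteq> S" using assms unfolding chain_on_def by blast
  note m = mx[OF C(1-3)]
  have mS: "mx C \<in> S" using m CS by blast
  have mc: "le (mx C) c" if "c \<in> C - I" for c
  proof -
    have "le (mx C) c \<or> le c (mx C)" using C(1) m that unfolding chain_on_def by blast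
    then show ?thesis using I_down[of c "mx C"] m CS that by blast
  qed
  show "Sm (Phi C) = (\<lambda>c. (c, one)) ` (C \<inter> I) \<union> (\<lambda>c. (mx C, c)) ` (C - I)"
    unfolding Phi_def Sm_def by auto
  show "finite (Phi C)" unfolding Phi_def using C(2) by simp
  have sub: "Phi C \<subseteq> B"
    unfolding Phi_def using None_B B_Some CS one one_nI m mc by auto
  have "bl a b \<or> bl b a" if "a \<in> Phi C" "b \<in> Phi C" for a b
    using that unfolding Phi_def
    apply (auto simp: bl_Some prod_le_def)
    using C(1) CS unfolding chain_on_def apply (auto simp: one)
    using m mc by blast+
  then show "chain_on B bl (Phi C)" using sub unfolding chain_on_def by blast
qed

lemma card_Phi:
  assumes C: "chain_on S le C" "finite C" "zero \<in> C" "one \<in> C"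
  shows "card C \<le> card (Phi C)"
proof -
  define f where "f c = (if c \<in> I then Some (c, one) else if c = one then None else Some (mx C, c))" for c
  have "f ` C \<subseteq> Phi C" unfolding f_def Phi_def by auto
  moreover have "inj_on f C" unfolding f_def inj_on_def by (auto split: if_splits)
  ultimately show ?thesis using Phi_chain(2)[OF C] card_inj_on_le by blast
qed

lemma plength_S_le: "plength S le \<le> plength B bl"
proof -
  obtain C where C: "chain_on S le C" "finite C" "plength S le = card C - 1"
    using pl_attained[OF fl] by blast
  define C' where "C' = insert zero (insert one C)"
  have CS: "C \<subseteq> S" using C unfolding chain_on_def by blast
  have C': "chain_on S le C'" "finite C'" "zero \<in> C'" "one \<in> C'"
    using C CS zero one p_refl unfolding C'_def chain_on_def by auto
  have "card C \<le> card C'" unfolding C'_def using C(2) card_mono[of "insert zero (insert one C)" C] by auto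
  also have "\<dots> \<le> card (Phi C')" by (rule card_Phi[OF C'])
  finally show ?thesis using C(3) pl_upper[OF finite_length_B Phi_chain(1)[OF C']] by linarith
qed

lemma part1: "finite_length B bl \<and> plength B bl = plength S le"
  using finite_length_B plength_B_le plength_S_le by auto


lemma bl_refl: "z \<in> B \<Longrightarrow> bl z z"
proof (cases z)
  case (Some p)
  assume "z \<in> B"
  then have "fst p \<in> S" "snd p \<in> S" using Some B_Some' I_sub by auto
  then show ?thesis using Some bl_Some p_refl unfolding prod_le_def by simp
qed simp

lemma ins_B: "maximal_chain_on B bl D \<Longrightarrow> x \<in> B \<Longrightarrow> \<forall>d\<in>D. bl x d \<or> bl d x \<Longrightarrow> x \<in> D"
  using maximal_insert bl_refl by metis

lemma poset_B: "poset_on B bl"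
  unfolding poset_on_def
proof (intro conjI ballI impI)
  fix x assume "x \<in> B" then show "bl x x" by (rule bl_refl)
next
  fix x y assume "x \<in> B" "y \<in> B" "bl x y \<and> bl y x"
  then show "x = y"
    by (cases x; cases y) (auto simp: B_SomeS bl_Some prod_le_def intro: p_antisym)
next
  fix x y z assume "x \<in> B" "y \<in> B" "z \<in> B" "bl x y \<and> bl y z"
  then show "bl x z"
    by (cases x; cases y; cases z) (auto simp: B_SomeS bl_Some prod_le_def intro: p_trans)
qed

lemma bounded_B: "bounded_poset B bl"
  unfolding bounded_poset_def
proof (intro conjI poset_B)
  show "\<exists>b\<in>B. \<forall>z\<in>B. bl b z"
  proof (intro bexI ballI)
    show "Some (zero, one) \<in> B" using B_Some zero_I one one_nI zero by auto
    fix z assume "z \<in> B" then show "bl (Some (zero, one)) z"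
      by (cases z) (auto simp: B_SomeS bl_Some prod_le_def zero one)
  qed
  show "\<exists>t\<in>B. \<forall>z\<in>B. bl z t"
  proof (rule bexI[OF _ None_B], rule ballI)
    fix z show "bl z None" by (rule bl_None)
  qed
qed

lemma K1:
  assumes D: "maximal_chain_on B bl D"
  shows "maximal_chain_on S le (fst ` Sm D \<union> snd ` Sm D)" "card D = card (fst ` Sm D \<union> snd ` Sm D)"
proof -
  have Dc: "chain_on B bl D" using D unfolding maximal_chain_on_def by blast
  have DB: "D \<subseteq> B" using Dc unfolding chain_on_def by blast
  note P = Sm_props[OF DB]
  note T = Sm_tot[OF Dc]
  have NoneD: "None \<in> D" by (rule ins_B[OF D None_B]) simp
  have "Some (zero, one) \<in> D"
  proof (rule ins_B[OF D])
    show "Some (zero, one) \<in> B" using B_Some zero_I one one_nI zero by auto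
    show "\<forall>d\<in>D. bl (Some (zero, one)) d \<or> bl d (Some (zero, one))"
    proof
      fix d assume "d \<in> D" then have "d \<in> B" using DB by blast
      then show "bl (Some (zero, one)) d \<or> bl d (Some (zero, one))"
        by (cases d) (auto simp: B_SomeS bl_Some prod_le_def zero one)
    qed
  qed
  then have zoE: "(zero, one) \<in> Sm D" unfolding Sm_def by simp
  define E where "E = Sm D"
  have fE: "finite E" using Sm_finite[OF Dc] E_def by blast
  have cardD: "card D = card E + 1"
  proof -
    have "D = insert None (Some ` E)" using D_split[of D] NoneD E_def by simp
    then show ?thesis using fE by (simp add: card_image)
  qed
  have cons: "\<forall>p\<in>E. \<forall>q\<in>E. R p q \<and> p \<noteq> q \<and> (\<forall>z\<in>E. R p z \<and> R z q \<longrightarrow> z = p \<or> z = q)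
            \<longrightarrow> fst p = fst q \<or> snd p = snd q"
  proof (intro ballI impI)
    fix p q assume pq: "p \<in> E" "q \<in> E" and h: "R p q \<and> p \<noteq> q \<and> (\<forall>z\<in>E. R p z \<and> R z q \<longrightarrow> z = p \<or> z = q)"
    show "fst p = fst q \<or> snd p = snd q"
    proof (rule ccontr)
      assume nn: "\<not> ?thesis"
      define z where "z = (fst q, snd p)"
      have Pp: "fst p \<in> I \<and> fst p \<in> S \<and> snd p \<in> S \<and> snd p \<notin> I \<and> le (fst p) (snd p)" using P pq E_def by blast
      have Pq: "fst q \<in> I \<and> fst q \<in> S \<and> snd q \<in> S \<and> snd q \<notin> I \<and> le (fst q) (snd q)" using P pq E_def by blast
      have Rpq: "le (fst p) (fst q)" "le (snd q) (snd p)" using h unfolding prod_le_def by auto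
      have zB: "Some z \<in> B" unfolding z_def B_Some using Pp Pq Rpq p_trans by blast
      have "Some z \<in> D"
      proof (rule ins_B[OF D zB], rule ballI)
        fix d assume dD: "d \<in> D"
        show "bl (Some z) d \<or> bl d (Some z)"
        proof (cases d)
          case None then show ?thesis by simp
        next
          case (Some e)
          then have eE: "e \<in> E" using dD E_def Sm_def by auto
          have Pe: "fst e \<in> I \<and> fst e \<in> S \<and> snd e \<in> S \<and> snd e \<notin> I \<and> le (fst e) (snd e)" using P eE E_def by blast
          have c1: "R e p \<or> R p e" and c2: "R e q \<or> R q e" using T eE pq E_def by blast+
          show ?thesis
          proof (cases "R e p")
            case True
            then have "R e z" unfolding z_def prod_le_def using Rpq Pe Pp Pq p_trans by auto
            then show ?thesis using Some bl_Some by simp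
          next
            case False
            show ?thesis
            proof (cases "R q e")
              case True
              then have "R z e" unfolding z_def prod_le_def using Rpq Pe Pp Pq p_trans by auto
              then show ?thesis using Some bl_Some by simp
            next
              case False2: False
              then have "R p e" "R e q" using c1 c2 False by auto
              then have "e = p \<or> e = q" using h eE by blast
              then have False using False False2 Pp Pq p_refl unfolding prod_le_def by auto
              then show ?thesis ..
            qed
          qed
        qed
      qed
      then have "z \<in> E" unfolding E_def Sm_def by simp
      moreover have "R p z" "R z q" unfolding z_def prod_le_def using Rpq Pp Pq p_refl by auto
      ultimately have "z = p \<or> z = q" using h by blast
      then show False using nn unfolding z_def by (metis fst_conv snd_conv)
    qed
  qed
  have ne: "E \<noteq> {}" using zoE E_def by blast
  have c1: "card E + 1 \<le> card (fst ` E) + card (snd ` E)"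
    using prod_chain_card[OF fE ne Sm_tot[OF Dc, folded E_def] Sm_hyps[OF DB, folded E_def]] .
  have c2: "card (fst ` E) + card (snd ` E) \<le> card E + 1"
    using prod_chain_card_eq[OF fE ne Sm_tot[OF Dc, folded E_def] Sm_hyps[OF DB, folded E_def] cons] .
  have "card (fst ` E) + card (snd ` E) = card (fst ` E \<union> snd ` E)"
    using disj_fs[OF DB] fE E_def by (simp add: card_Un_disjoint)
  then show "card D = card (fst ` Sm D \<union> snd ` Sm D)" using c1 c2 cardD E_def by simp
  have Psi: "chain_on S le (fst ` Sm D \<union> snd ` Sm D)" by (rule Psi_chain[OF Dc])
  show "maximal_chain_on S le (fst ` Sm D \<union> snd ` Sm D)"
    unfolding maximal_chain_on_def
  proof (intro conjI Psi allI impI)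
    fix D' assume D': "chain_on S le D' \<and> fst ` Sm D \<union> snd ` Sm D \<subseteq> D'"
    have "z \<in> fst ` E \<union> snd ` E" if zD': "z \<in> D'" for z
    proof -
      have zS: "z \<in> S" using D' zD' unfolding chain_on_def by blast
      have cmp: "le z w \<or> le w z" if "w \<in> fst ` E \<union> snd ` E" for w
        using D' zD' that E_def unfolding chain_on_def by blast
      have TE: "\<forall>p\<in>E. \<forall>q\<in>E. R p q \<or> R q p" using T E_def by simp
      have trE: "\<forall>p\<in>E. \<forall>q\<in>E. \<forall>r\<in>E. R p q \<longrightarrow> R q r \<longrightarrow> R p r"
        using P E_def p_trans unfolding prod_le_def by blast
      have PE: "\<And>e. e \<in> E \<Longrightarrow> fst e \<in> I \<and> fst e \<in> S \<and> snd e \<in> S \<and> snd e \<notin> I \<and> le (fst e) (snd e)"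
        using P E_def by blast
      show ?thesis
      proof (cases "z \<in> I")
        case True
        define L where "L = {e \<in> E. le (fst e) z}"
        have zoL: "(zero, one) \<in> L" unfolding L_def using zoE E_def zero zS by auto
        obtain es where es: "es \<in> L" "\<forall>q\<in>L. R q es"
        proof -
          have LE: "L \<subseteq> E" unfolding L_def by blast
          have fL: "finite L" using finite_subset[OF LE fE] .
          have "L \<noteq> {}" using zoL by blast
          from chain_max[OF fL this ball2_sub[OF TE LE] ball3_sub[OF trE LE]]
          show ?thesis using that by blast
        qed
        have esE: "es \<in> E" "le (fst es) z" using es unfolding L_def by auto
        have zs: "le z (snd es)"
        proof -
          have "le z (snd es) \<or> le (snd es) z" using cmp esE by blast
          then show ?thesis using I_down[of "snd es" z] PE[OF esE(1)] True by blast
        qed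
        have wB: "Some (z, snd es) \<in> B" using B_Some True PE[OF esE(1)] zs by blast
        have "Some (z, snd es) \<in> D"
        proof (rule ins_B[OF D wB], rule ballI)
          fix d assume dD: "d \<in> D"
          show "bl (Some (z, snd es)) d \<or> bl d (Some (z, snd es))"
          proof (cases d)
            case None then show ?thesis by simp
          next
            case (Some e)
            then have eE: "e \<in> E" using dD E_def Sm_def by auto
            show ?thesis
            proof (cases "le (fst e) z")
              case True
              then have "R e es" using es eE unfolding L_def by blast
              then have "R e (z, snd es)" using True unfolding prod_le_def by simp
              then show ?thesis using Some bl_Some by simp
            next
              case False
              then have ze: "le z (fst e)" using cmp eE by blast
              have "R e es \<or> R es e" using TE eE esE by blast
              moreover have "\<not> R e es"
              proof
                assume "R e es"
                then have "le (fst e) (fst es)" unfolding prod_le_def by simp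
                then have "le (fst e) z" using esE p_trans PE[OF eE] PE[OF esE(1)] zS by blast
                then show False using False by simp
              qed
              ultimately have "R es e" by simp
              then have "R (z, snd es) e" using ze unfolding prod_le_def by simp
              then show ?thesis using Some bl_Some by simp
            qed
          qed
        qed
        then have "(z, snd es) \<in> E" unfolding E_def Sm_def by simp
        then show ?thesis by force
      next
        case False
        define L where "L = {e \<in> E. le z (snd e)}"
        have zoL: "(zero, one) \<in> L" unfolding L_def using zoE E_def one zS by auto
        obtain es where es: "es \<in> L" "\<forall>q\<in>L. R q es"
        proof -
          have LE: "L \<subseteq> E" unfolding L_def by blast
          have fL: "finite L" using finite_subset[OF LE fE] .
          have "L \<noteq> {}" using zoL by blast
          from chain_max[OF fL this ball2_sub[OF TE LE] ball3_sub[OF trE LE]]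
          show ?thesis using that by blast
        qed
        have esE: "es \<in> E" "le z (snd es)" using es unfolding L_def by auto
        have zs: "le (fst es) z"
        proof -
          have "le z (fst es) \<or> le (fst es) z" using cmp esE by blast
          then show ?thesis using I_down[of z "fst es"] PE[OF esE(1)] False zS by blast
        qed
        have wB: "Some (fst es, z) \<in> B" using B_Some False PE[OF esE(1)] zs zS by blast
        have "Some (fst es, z) \<in> D"
        proof (rule ins_B[OF D wB], rule ballI)
          fix d assume dD: "d \<in> D"
          show "bl (Some (fst es, z)) d \<or> bl d (Some (fst es, z))"
          proof (cases d)
            case None then show ?thesis by simp
          next
            case (Some e)
            then have eE: "e \<in> E" using dD E_def Sm_def by auto
            show ?thesis
            proof (cases "le z (snd e)")
              case True
              then have "R e es" using es eE unfolding L_def by blast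
              then have "R e (fst es, z)" using True unfolding prod_le_def by simp
              then show ?thesis using Some bl_Some by simp
            next
              case False
              then have ze: "le (snd e) z" using cmp eE by blast
              have "R e es \<or> R es e" using TE eE esE by blast
              moreover have "\<not> R e es"
              proof
                assume "R e es"
                then have "le (snd es) (snd e)" unfolding prod_le_def by simp
                then have "le z (snd e)" using esE p_trans PE[OF eE] PE[OF esE(1)] zS by blast
                then show False using False by simp
              qed
              ultimately have "R es e" by simp
              then have "R (fst es, z) e" using ze unfolding prod_le_def by simp
              then show ?thesis using Some bl_Some by simp
            qed
          qed
        qed
        then have "(fst es, z) \<in> E" unfolding E_def Sm_def by simp
        then show ?thesis by force
      qed
    qed
    then show "D' = fst ` Sm D \<union> snd ` Sm D" using D' E_def by blast
  qed
qed


lemma max_chain_fin: "maximal_chain_on S le C \<Longrightarrow> finite C"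
  using pl_bound[OF fl] unfolding maximal_chain_on_def by blast

lemma K2:
  assumes C: "maximal_chain_on S le C"
  shows "maximal_chain_on B bl (Phi C)" "fst ` Sm (Phi C) \<union> snd ` Sm (Phi C) = C"
proof -
  have Cc: "chain_on S le C" using C unfolding maximal_chain_on_def by blast
  have CS: "C \<subseteq> S" using Cc unfolding chain_on_def by blast
  have fC: "finite C" by (rule max_chain_fin[OF C])
  have zC: "zero \<in> C" by (rule maximal_insert[OF C]) (use zero p_refl CS in auto)
  have oC: "one \<in> C" by (rule maximal_insert[OF C]) (use one p_refl CS in auto)
  note Ph = Phi_chain[OF Cc fC zC oC]
  note m = mx[OF Cc fC zC]
  have mS: "mx C \<in> S" using m CS by blast
  have mc: "le (mx C) c" if "c \<in> C - I" for c
  proof -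
    have "le (mx C) c \<or> le c (mx C)" using Cc m that unfolding chain_on_def by blast
    then show ?thesis using I_down[of c "mx C"] m CS that by blast
  qed
  show "fst ` Sm (Phi C) \<union> snd ` Sm (Phi C) = C"
  proof -
    have A: "fst ` ((\<lambda>c. (c, one)) ` (C \<inter> I)) = C \<inter> I" by (simp add: image_image)
    have B': "fst ` ((\<lambda>c. (mx C, c)) ` (C - I)) \<subseteq> C \<inter> I" using m by auto
    have C': "snd ` ((\<lambda>c. (c, one)) ` (C \<inter> I)) \<subseteq> C - I" using oC one_nI by auto
    have D': "snd ` ((\<lambda>c. (mx C, c)) ` (C - I)) = C - I" by (simp add: image_image)
    have "fst ` ((\<lambda>c. (c, one)) ` (C \<inter> I) \<union> (\<lambda>c. (mx C, c)) ` (C - I)) = C \<inter> I"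
      unfolding image_Un A using B' by (rule Un_absorb2)
    moreover have "snd ` ((\<lambda>c. (c, one)) ` (C \<inter> I) \<union> (\<lambda>c. (mx C, c)) ` (C - I)) = C - I"
      unfolding image_Un D' using C' by (rule Un_absorb1)
    ultimately show ?thesis unfolding Ph(3) by (simp add: Int_Diff_Un)
  qed
  show "maximal_chain_on B bl (Phi C)"
    unfolding maximal_chain_on_def
  proof (intro conjI Ph(1) allI impI)
    fix D assume D: "chain_on B bl D \<and> Phi C \<subseteq> D"
    have "d \<in> Phi C" if dD: "d \<in> D" for d
    proof (cases d)
      case None then show ?thesis unfolding Phi_def by simp
    next
      case (Some p)
      obtain u v where p: "p = (u, v)" by fastforce
      have uv: "u \<in> I" "u \<in> S" "v \<in> S" "v \<notin> I" "le u v"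
        using D dD Some p B_Some I_sub unfolding chain_on_def by blast+
      have cmp: "bl (Some (u, v)) e \<or> bl e (Some (u, v))" if "e \<in> Phi C" for e
        using D dD Some p that unfolding chain_on_def by blast
      have c1: "(le u c \<and> le one v) \<or> (le c u \<and> le v one)" if cI: "c \<in> C \<inter> I" for c
      proof -
        have "Some (c, one) \<in> Phi C" using cI unfolding Phi_def by blast
        then show ?thesis using cmp by fastforce
      qed
      have c2: "(le u (mx C) \<and> le c v) \<or> (le (mx C) u \<and> le v c)" if cI: "c \<in> C - I" for c
      proof -
        have "Some (mx C, c) \<in> Phi C" using cI unfolding Phi_def by blast
        then show ?thesis using cmp by fastforce
      qed
      have uC: "u \<in> C"
      proof (rule maximal_insert[OF C uv(2) p_refl[OF uv(2)]], rule ballI)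
        fix c assume cC: "c \<in> C"
        show "le u c \<or> le c u"
        proof (cases "c \<in> I")
          case True then show ?thesis using c1[of c] cC by blast
        next
          case False
          then have "le u (mx C) \<and> le c v \<or> le (mx C) u \<and> le v c" using c2[of c] cC by blast
          then show ?thesis using mc[of c] cC False p_trans[of u "mx C" c] p_trans[of u v c] uv mS CS by blast
        qed
      qed
      have vC: "v \<in> C"
      proof (rule maximal_insert[OF C uv(3) p_refl[OF uv(3)]], rule ballI)
        fix c assume cC: "c \<in> C"
        show "le v c \<or> le c v"
        proof (cases "c \<in> I")
          case True
          then have "le u c \<and> le one v \<or> le c u \<and> le v one" using c1[of c] cC by blast
          then show ?thesis
          proof
            assume "le u c \<and> le one v"
            then have "v = one" using p_antisym one uv by blast
            then show ?thesis using one cC CS by blast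
          next
            assume "le c u \<and> le v one"
            then show ?thesis using p_trans[of c u v] uv cC CS by blast
          qed
        next
          case False
          then show ?thesis using c2[of c] cC by blast
        qed
      qed
      show ?thesis
      proof (cases "v = one")
        case True
        then show ?thesis using Some p uC uv unfolding Phi_def by auto
      next
        case False
        have "le u (mx C) \<and> le one v \<or> le (mx C) u \<and> le v one" using c1[of "mx C"] m by blast
        moreover have "\<not> le one v" using False p_antisym one uv by blast
        ultimately have "le (mx C) u" by blast
        moreover have "le u (mx C)" using m uC uv by blast
        ultimately have "u = mx C" using p_antisym uv mS by blast
        then show ?thesis using Some p vC uv unfolding Phi_def by auto
      qed
    qed
    then show "D = Phi C" using D by blast
  qed
qed

lemma part2: "graded B bl \<longleftrightarrow> graded S le"
proof
  assume g: "graded B bl"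
  show "graded S le" unfolding graded_def
  proof (intro conjI bnd allI impI)
    fix C1 C2 assume h: "maximal_chain_on S le C1 \<and> maximal_chain_on S le C2"
    have "card C1 = card (Phi C1)" using K1(2)[OF K2(1)] K2(2) h by metis
    moreover have "card C2 = card (Phi C2)" using K1(2)[OF K2(1)] K2(2) h by metis
    moreover have "card (Phi C1) = card (Phi C2)" using g K2(1) h unfolding graded_def by blast
    ultimately show "card C1 = card C2" by simp
  qed
next
  assume g: "graded S le"
  show "graded B bl" unfolding graded_def
  proof (intro conjI bounded_B allI impI)
    fix D1 D2 assume h: "maximal_chain_on B bl D1 \<and> maximal_chain_on B bl D2"
    then show "card D1 = card D2" using K1 g unfolding graded_def by metis
  qed
qed

end


context bier_ctx begin

lemma chain_sub: "chain_on A le' C \<Longrightarrow> A \<subseteq> A' \<Longrightarrow> chain_on A' le' C"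
  unfolding chain_on_def by blast

lemma pl_DS:
  assumes xy: "x \<in> I" "y \<in> S" "y \<notin> I" "le x y"
  shows "plength {z \<in> B. bl z (Some (x, y))} bl = plength {z\<in>S. le z x} le + plength {z\<in>S. le y z} le"
proof -
  define A where "A = {z\<in>S. le z x}"
  define U where "U = {z\<in>S. le y z}"
  define DS where "DS = {z \<in> B. bl z (Some (x, y))}"
  have xS: "x \<in> S" using xy I_sub by blast
  have DS_eq: "DS = Some ` (A \<times> U)"
  proof (rule set_eqI)
    fix z show "z \<in> DS \<longleftrightarrow> z \<in> Some ` (A \<times> U)"
    proof (cases z)
      case None then show ?thesis unfolding DS_def by simp
    next
      case (Some p)
      obtain u v where p: "p = (u, v)" by fastforce
      have "Some (u, v) \<in> DS \<longleftrightarrow> (u, v) \<in> A \<times> U"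
      proof
        assume "Some (u, v) \<in> DS"
        then show "(u, v) \<in> A \<times> U" unfolding DS_def A_def U_def using B_Some I_sub
          by (auto simp: bl_Some prod_le_def)
      next
        assume h: "(u, v) \<in> A \<times> U"
        then have "u \<in> I" using I_down xy unfolding A_def by blast
        moreover have "v \<notin> I" using I_down[of y v] h xy unfolding U_def by blast
        moreover have "le u v" using h p_trans[of u x y] p_trans[of u y v] xy xS unfolding A_def U_def by auto
        ultimately show "Some (u, v) \<in> DS" using h unfolding DS_def A_def U_def
          by (auto simp: B_Some bl_Some prod_le_def)
      qed
      then show ?thesis using Some p by auto
    qed
  qed
  have DSB: "DS \<subseteq> B" unfolding DS_def by blast
  have flDS: "finite_length DS bl" by (rule fl_subset[OF finite_length_B DSB])
  have flA: "finite_length A le" by (rule fl_subset[OF fl]) (auto simp: A_def)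
  have flU: "finite_length U le" by (rule fl_subset[OF fl]) (auto simp: U_def)
  have le1: "plength DS bl \<le> plength A le + plength U le"
  proof -
    obtain D where D: "chain_on DS bl D" "finite D" "plength DS bl = card D - 1"
      using pl_attained[OF flDS] by blast
    have DB: "chain_on B bl D" using chain_sub[OF D(1) DSB] .
    have DsB: "D \<subseteq> B" using DB unfolding chain_on_def by blast
    have "None \<notin> D" using D(1) DS_eq unfolding chain_on_def by auto
    then have Deq: "D = Some ` Sm D" using D_split[of D] by simp
    have EAU: "Sm D \<subseteq> A \<times> U" using D(1) DS_eq unfolding chain_on_def Sm_def by auto
    show ?thesis
    proof (cases "Sm D = {}")
      case True then show ?thesis using Deq D(3) by simp
    next
      case False
      have fE: "finite (Sm D)" using Sm_finite[OF DB] by blast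
      have cD: "card D = card (Sm D)" using Deq card_image[OF inj_Some] by metis
      have pc: "card (Sm D) + 1 \<le> card (fst ` Sm D) + card (snd ` Sm D)"
        by (rule prod_chain_card[OF fE False Sm_tot[OF DB] Sm_hyps[OF DsB]])
      note T = Sm_tot[OF DB]
      have ch1: "chain_on A le (fst ` Sm D)" using EAU T unfolding chain_on_def prod_le_def by fastforce
      have ch2: "chain_on U le (snd ` Sm D)" using EAU T unfolding chain_on_def prod_le_def by fastforce
      have "card (fst ` Sm D) - 1 \<le> plength A le" by (rule pl_upper[OF flA ch1])
      moreover have "card (snd ` Sm D) - 1 \<le> plength U le" by (rule pl_upper[OF flU ch2])
      moreover have "card (fst ` Sm D) \<ge> 1" "card (snd ` Sm D) \<ge> 1"
        using fE False by (auto simp: Suc_le_eq card_gt_0_iff)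
      ultimately show ?thesis using pc cD D(3) by linarith
    qed
  qed
  have le2: "plength A le + plength U le \<le> plength DS bl"
  proof -
    obtain C1 where C1: "chain_on A le C1" "finite C1" "plength A le = card C1 - 1"
      using pl_attained[OF flA] by blast
    obtain C2 where C2: "chain_on U le C2" "finite C2" "plength U le = card C2 - 1"
      using pl_attained[OF flU] by blast
    define C1' where "C1' = insert x C1"
    define C2' where "C2' = insert one C2"
    have C1A: "C1' \<subseteq> A" using C1 xS p_refl unfolding C1'_def A_def chain_on_def by auto
    have C2U: "C2' \<subseteq> U" using C2 one xy unfolding C2'_def U_def chain_on_def by auto
    have ch1: "\<forall>a\<in>C1'. \<forall>b\<in>C1'. le a b \<or> le b a"
      using C1 xS p_refl unfolding C1'_def A_def chain_on_def by auto
    have ch2: "\<forall>a\<in>C2'. \<forall>b\<in>C2'. le a b \<or> le b a"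
      using C2 one unfolding C2'_def U_def chain_on_def by auto
    define E1 where "E1 = (\<lambda>c. (c, one)) ` C1'"
    define E2 where "E2 = (\<lambda>d. (x, d)) ` C2'"
    define D where "D = Some ` (E1 \<union> E2)"
    have DDS: "D \<subseteq> DS" unfolding DS_eq D_def E1_def E2_def using C1A C2U xS one xy
      by (auto simp: A_def U_def p_refl)
    have c1S: "\<forall>c\<in>C1'. c \<in> S \<and> le c x" using C1A unfolding A_def by blast
    have c2S: "\<forall>d\<in>C2'. d \<in> S \<and> le d one" using C2U one unfolding U_def by blast
    have Dform: "(\<exists>c\<in>C1'. a = Some (c, one)) \<or> (\<exists>d\<in>C2'. a = Some (x, d))" if "a \<in> D" for a
      using that unfolding D_def E1_def E2_def by blast
    have h11: "bl (Some (c, one)) (Some (c', one)) \<or> bl (Some (c', one)) (Some (c, one))"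
      if "c \<in> C1'" "c' \<in> C1'" for c c' using ch1 that p_refl[OF one(1)] by auto
    have h12: "bl (Some (c, one)) (Some (x, d))" if "c \<in> C1'" "d \<in> C2'" for c d
      using c1S c2S that by auto
    have h22: "bl (Some (x, d)) (Some (x, d')) \<or> bl (Some (x, d')) (Some (x, d))"
      if "d \<in> C2'" "d' \<in> C2'" for d d' using ch2 that p_refl[OF xS] by auto
    have "bl a b \<or> bl b a" if "a \<in> D" "b \<in> D" for a b
      using Dform[OF that(1)] Dform[OF that(2)] h11 h12 h22 by blast
    then have chD: "chain_on DS bl D" using DDS unfolding chain_on_def by blast
    have f1: "finite C1'" "finite C2'" using C1 C2 unfolding C1'_def C2'_def by auto
    have cE1: "card E1 = card C1'" unfolding E1_def by (rule card_image) (auto simp: inj_on_def)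
    have cE2: "card E2 = card C2'" unfolding E2_def by (rule card_image) (auto simp: inj_on_def)
    have "E1 \<inter> E2 \<subseteq> {(x, one)}" unfolding E1_def E2_def by auto
    then have cI: "card (E1 \<inter> E2) \<le> 1" using card_mono[of "{(x, one)}" "E1 \<inter> E2"] by simp
    have fE: "finite E1" "finite E2" using f1 unfolding E1_def E2_def by auto
    have cU: "card E1 + card E2 = card (E1 \<union> E2) + card (E1 \<inter> E2)" using card_Un_Int[OF fE] .
    have cD: "card D = card (E1 \<union> E2)" unfolding D_def by (rule card_image[OF inj_Some])
    have "card C1 \<le> card C1'" "card C2 \<le> card C2'" unfolding C1'_def C2'_def using C1 C2
      by (simp_all add: card_insert_le)
    moreover have "card C1' \<ge> 1" "card C2' \<ge> 1" using f1 unfolding C1'_def C2'_def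
      by (auto simp: Suc_le_eq card_gt_0_iff)
    moreover have "card D - 1 \<le> plength DS bl" by (rule pl_upper[OF flDS chD])
    ultimately show ?thesis using C1(3) C2(3) cE1 cE2 cI cU cD by linarith
  qed
  show ?thesis using le1 le2 unfolding A_def U_def DS_def by simp
qed

lemma up_len:
  assumes g: "graded S le" and yS: "y \<in> S"
  shows "plength {z\<in>S. le y z} le = plength S le - plength {z\<in>S. le z y} le"
proof -
  define A where "A = {z\<in>S. le z y}"
  define U where "U = {z\<in>S. le y z}"
  have flA: "finite_length A le" by (rule fl_subset[OF fl]) (auto simp: A_def)
  have flU: "finite_length U le" by (rule fl_subset[OF fl]) (auto simp: U_def)
  obtain C1 where C1: "chain_on A le C1" "finite C1" "plength A le = card C1 - 1"
    using pl_attained[OF flA] by blast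
  obtain C2 where C2: "chain_on U le C2" "finite C2" "plength U le = card C2 - 1"
    using pl_attained[OF flU] by blast
  define C1' where "C1' = insert y C1"
  define C2' where "C2' = insert y C2"
  have ch1: "chain_on A le C1'" using C1 yS p_refl unfolding C1'_def A_def chain_on_def by auto
  have ch2: "chain_on U le C2'" using C2 yS p_refl unfolding C2'_def U_def chain_on_def by auto
  have f1: "finite C1'" "finite C2'" using C1 C2 unfolding C1'_def C2'_def by auto
  have g1: "card C1' \<ge> 1" "card C2' \<ge> 1" using f1 unfolding C1'_def C2'_def
    by (auto simp: Suc_le_eq card_gt_0_iff)
  have e1: "card C1' - 1 = plength A le" using pl_upper[OF flA ch1] C1 card_insert_le[of C1 y]
    unfolding C1'_def by linarith
  have e2: "card C2' - 1 = plength U le" using pl_upper[OF flU ch2] C2 card_insert_le[of C2 y]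
    unfolding C2'_def by linarith
  define M where "M = C1' \<union> C2'"
  have AS: "A \<subseteq> S" "U \<subseteq> S" unfolding A_def U_def by auto
  have C1A: "C1' \<subseteq> A" and C2U: "C2' \<subseteq> U" using ch1 ch2 unfolding chain_on_def by auto
  have chM: "chain_on S le M"
  proof -
    have "le a b \<or> le b a" if "a \<in> M" "b \<in> M" for a b
    proof -
      have "a \<in> A \<and> b \<in> U \<Longrightarrow> le a b" for a b using p_trans[of a y b] yS unfolding A_def U_def by auto
      then show ?thesis using that ch1 ch2 C1A C2U unfolding M_def chain_on_def by blast
    qed
    then show ?thesis using C1A C2U AS unfolding M_def chain_on_def by blast
  qed
  have cM: "card M + 1 = card C1' + card C2'"
  proof -
    have "C1' \<inter> C2' = {y}" using C1A C2U p_antisym yS unfolding C1'_def C2'_def A_def U_def by auto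
    then show ?thesis using card_Un_Int[OF f1] unfolding M_def by simp
  qed
  have maxM: "maximal_chain_on S le M"
    unfolding maximal_chain_on_def
  proof (intro conjI chM allI impI)
    fix D assume D: "chain_on S le D \<and> M \<subseteq> D"
    have "z \<in> M" if zD: "z \<in> D" for z
    proof -
      have zS: "z \<in> S" using D zD unfolding chain_on_def by blast
      have cmp: "\<forall>w\<in>M. le z w \<or> le w z" using D zD unfolding chain_on_def by blast
      have yM: "y \<in> M" unfolding M_def C1'_def by simp
      show ?thesis
      proof (cases "le z y")
        case True
        have "chain_on A le (insert z C1')" using ch1 cmp zS True p_refl unfolding chain_on_def M_def A_def by auto
        from pl_upper[OF flA this] have pu: "card (insert z C1') - 1 \<le> plength A le" .
        show ?thesis
        proof (rule ccontr)
          assume "z \<notin> M" then have "z \<notin> C1'" unfolding M_def by blast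
          then have "card (insert z C1') = Suc (card C1')" using f1 by simp
          then show False using pu e1 g1 by linarith
        qed
      next
        case False
        then have yz: "le y z" using cmp yM by blast
        have "chain_on U le (insert z C2')" using ch2 cmp zS yz p_refl unfolding chain_on_def M_def U_def by auto
        from pl_upper[OF flU this] have pu: "card (insert z C2') - 1 \<le> plength U le" .
        show ?thesis
        proof (rule ccontr)
          assume "z \<notin> M" then have "z \<notin> C2'" unfolding M_def by blast
          then have "card (insert z C2') = Suc (card C2')" using f1 by simp
          then show False using pu e2 g1 by linarith
        qed
      qed
    qed
    then show "D = M" using D by blast
  qed
  obtain C0 where C0: "chain_on S le C0" "finite C0" "plength S le = card C0 - 1"
    using pl_attained[OF fl] by blast
  define C0' where "C0' = insert zero C0"
  have ch0: "chain_on S le C0'" using C0 zero p_refl unfolding C0'_def chain_on_def by auto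
  have g0: "card C0' \<ge> 1" using C0 unfolding C0'_def by (auto simp: Suc_le_eq card_gt_0_iff)
  have e0: "card C0' - 1 = plength S le" using pl_upper[OF fl ch0] C0 card_insert_le[of C0 zero]
    unfolding C0'_def by linarith
  have max0: "maximal_chain_on S le C0'" by (rule maxcard_maximal[OF fl ch0 e0 g0])
  have "card M = card C0'" using g maxM max0 unfolding graded_def by blast
  then show ?thesis using cM e0 e1 e2 g0 g1 unfolding A_def U_def by linarith
qed

lemma part2b: "graded S le \<longrightarrow> (\<forall>x y. x \<in> I \<and> y \<in> S - I \<and> le x y \<longrightarrow>
           prank B bl (Some (x, y)) = prank S le x + (plength S le - prank S le y))"
  unfolding prank_def using pl_DS up_len by auto

lemma part3a: "\<forall>x y. Some (x, y) \<in> B \<longrightarrow>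
           poset_iso (interval B bl (Some (x, y)) None) bl
                     (bier_carrier (interval S le x y) le (I \<inter> interval S le x y)) bl"
proof (intro allI impI)
  fix x y assume h: "Some (x, y) \<in> B"
  have xy: "x \<in> I" "x \<in> S" "y \<in> S" "y \<notin> I" "le x y" using h B_Some I_sub by auto
  have eq: "interval B bl (Some (x, y)) None = bier_carrier (interval S le x y) le (I \<inter> interval S le x y)"
  proof (rule set_eqI)
    fix z show "z \<in> interval B bl (Some (x, y)) None \<longleftrightarrow> z \<in> bier_carrier (interval S le x y) le (I \<inter> interval S le x y)"
    proof (cases z)
      case None then show ?thesis unfolding interval_def bier_carrier_def by auto
    next
      case (Some p)
      obtain a b where p: "p = (a, b)" by fastforce
      show ?thesis unfolding Some p interval_def bier_carrier_def
        using xy I_sub p_trans[of a b y] p_trans[of x a b]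
        by (auto simp: bl_Some prod_le_def)
    qed
  qed
  show "poset_iso (interval B bl (Some (x, y)) None) bl
                     (bier_carrier (interval S le x y) le (I \<inter> interval S le x y)) bl"
    unfolding poset_iso_def eq by (rule exI[of _ id]) simp
qed

lemma part3b: "\<forall>x' y' x y. Some (x', y') \<in> B \<and> Some (x, y) \<in> B \<and> bl (Some (x', y')) (Some (x, y)) \<longrightarrow>
           poset_iso (interval B bl (Some (x', y')) (Some (x, y))) bl
                     (interval S le x' x \<times> interval S le y y') (prod_le le (\<lambda>a b. le b a))"
proof (intro allI impI)
  fix x' y' x y assume h: "Some (x', y') \<in> B \<and> Some (x, y) \<in> B \<and> bl (Some (x', y')) (Some (x, y))"
  have xy: "x \<in> I" "x \<in> S" "y \<in> S" "y \<notin> I" "le x y" "x' \<in> S" "y' \<in> S" "le x' x" "le y y'"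
    using h B_Some I_sub by (auto simp: bl_Some prod_le_def)
  define T where "T = interval S le x' x \<times> interval S le y y'"
  have eq: "interval B bl (Some (x', y')) (Some (x, y)) = Some ` T"
  proof (rule set_eqI)
    fix z show "z \<in> interval B bl (Some (x', y')) (Some (x, y)) \<longleftrightarrow> z \<in> Some ` T"
    proof (cases z)
      case None then show ?thesis unfolding interval_def by auto
    next
      case (Some p)
      obtain a b where p: "p = (a, b)" by fastforce
      have "Some (a, b) \<in> interval B bl (Some (x', y')) (Some (x, y)) \<longleftrightarrow> (a, b) \<in> T"
      proof
        assume "Some (a, b) \<in> interval B bl (Some (x', y')) (Some (x, y))"
        then show "(a, b) \<in> T" unfolding interval_def T_def using I_sub
          by (auto simp: B_SomeS bl_Some prod_le_def)
      next
        assume t: "(a, b) \<in> T"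
        then have ab: "a \<in> S" "b \<in> S" "le x' a" "le a x" "le y b" "le b y'" unfolding T_def interval_def by auto
        have "a \<in> I" using I_down ab xy by blast
        moreover have "b \<notin> I" using I_down[of y b] ab xy by blast
        moreover have "le a b" using p_trans[of a x y] p_trans[of a y b] ab xy by blast
        ultimately show "Some (a, b) \<in> interval B bl (Some (x', y')) (Some (x, y))"
          unfolding interval_def B_Some using ab by (auto simp: B_Some bl_Some prod_le_def)
      qed
      then show ?thesis using Some p by auto
    qed
  qed
  have bij: "bij_betw the (Some ` T) T"
    by (rule bij_betw_imageI) (auto simp: inj_on_def image_image)
  show "poset_iso (interval B bl (Some (x', y')) (Some (x, y))) bl T (prod_le le (\<lambda>a b. le b a))"
    unfolding poset_iso_def eq
    by (rule exI[of _ the]) (use bij in \<open>auto simp: bl_Some\<close>)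
qed

lemma part4: "is_lattice S le \<longrightarrow> is_lattice B bl"
proof
  assume L: "is_lattice S le"
  show "is_lattice B bl" unfolding is_lattice_def
  proof (intro ballI conjI)
    fix a b assume ab: "a \<in> B" "b \<in> B"
    show "\<exists>s\<in>B. bl a s \<and> bl b s \<and> (\<forall>u\<in>B. bl a u \<and> bl b u \<longrightarrow> bl s u)"
    proof (cases "a = None \<or> b = None")
      case True
      then show ?thesis using None_B by (auto intro!: bexI[of _ None]; metis bier_le.elims(2) bier_le.simps(1))
    next
      case False
      then obtain a1 a2 b1 b2 where ab': "a = Some (a1, a2)" "b = Some (b1, b2)" by (cases a; cases b) auto
      have A: "a1 \<in> I" "a1 \<in> S" "a2 \<in> S" "a2 \<notin> I" "le a1 a2" "b1 \<in> I" "b1 \<in> S" "b2 \<in> S" "b2 \<notin> I" "le b1 b2"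
        using ab ab' B_Some I_sub by auto
      obtain s1 where s1: "s1 \<in> S" "le a1 s1" "le b1 s1" "\<forall>u\<in>S. le a1 u \<and> le b1 u \<longrightarrow> le s1 u"
        using conjunct1[OF L[unfolded is_lattice_def, rule_format, OF A(2) A(7)]] by blast
      obtain i2 where i2: "i2 \<in> S" "le i2 a2" "le i2 b2" "\<forall>u\<in>S. le u a2 \<and> le u b2 \<longrightarrow> le u i2"
        using conjunct2[OF L[unfolded is_lattice_def, rule_format, OF A(3) A(8)]] by blast
      show ?thesis
      proof (cases "s1 \<in> I \<and> i2 \<notin> I \<and> le s1 i2")
        case True
        have sB: "Some (s1, i2) \<in> B" using True B_Some i2 by blast
        show ?thesis
        proof (rule bexI[OF _ sB], intro conjI ballI impI)
          show "bl a (Some (s1, i2))" "bl b (Some (s1, i2))" using ab' s1 i2 by (auto simp: bl_Some prod_le_def)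
          fix u assume u: "u \<in> B" "bl a u \<and> bl b u"
          show "bl (Some (s1, i2)) u"
          proof (cases u)
            case (Some p)
            obtain u1 u2 where p: "p = (u1, u2)" by fastforce
            show ?thesis using u Some p ab' s1 i2 B_Some I_sub by (auto simp: bl_Some prod_le_def)
          qed simp
        qed
      next
        case False
        show ?thesis
        proof (rule bexI[OF _ None_B], intro conjI ballI impI)
          show "bl a None" "bl b None" by simp_all
          fix u assume u: "u \<in> B" "bl a u \<and> bl b u"
          show "bl None u"
          proof (cases u)
            case (Some p)
            obtain u1 u2 where p: "p = (u1, u2)" by fastforce
            have U: "u1 \<in> I" "u1 \<in> S" "u2 \<in> S" "u2 \<notin> I" "le u1 u2" using u Some p B_Some I_sub by auto
            have "le a1 u1" "le b1 u1" "le u2 a2" "le u2 b2" using u Some p ab' by (auto simp: bl_Some prod_le_def)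
            then have "le s1 u1" "le u2 i2" using s1 i2 U by auto
            then have "s1 \<in> I" "i2 \<notin> I" "le s1 i2" using I_down[of s1 u1] I_down[of u2 i2] U s1 i2
                p_trans[of s1 u1 u2] p_trans[of s1 u2 i2] by auto
            then show ?thesis using False by blast
          qed simp
        qed
      qed
    qed
    show "\<exists>i\<in>B. bl i a \<and> bl i b \<and> (\<forall>u\<in>B. bl u a \<and> bl u b \<longrightarrow> bl u i)"
    proof (cases "a = None \<or> b = None")
      case True
      then show ?thesis
      proof
        assume "a = None" then show ?thesis using ab bl_refl by (intro bexI[of _ b]) auto
      next
        assume "b = None" then show ?thesis using ab bl_refl by (intro bexI[of _ a]) auto
      qed
    next
      case False
      then obtain a1 a2 b1 b2 where ab': "a = Some (a1, a2)" "b = Some (b1, b2)" by (cases a; cases b) auto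
      have A: "a1 \<in> I" "a1 \<in> S" "a2 \<in> S" "a2 \<notin> I" "le a1 a2" "b1 \<in> I" "b1 \<in> S" "b2 \<in> S" "b2 \<notin> I" "le b1 b2"
        using ab ab' B_Some I_sub by auto
      obtain i1 where i1: "i1 \<in> S" "le i1 a1" "le i1 b1" "\<forall>u\<in>S. le u a1 \<and> le u b1 \<longrightarrow> le u i1"
        using conjunct2[OF L[unfolded is_lattice_def, rule_format, OF A(2) A(7)]] by blast
      obtain s2 where s2: "s2 \<in> S" "le a2 s2" "le b2 s2" "\<forall>u\<in>S. le a2 u \<and> le b2 u \<longrightarrow> le s2 u"
        using conjunct1[OF L[unfolded is_lattice_def, rule_format, OF A(3) A(8)]] by blast
      have "i1 \<in> I" using I_down i1 A by blast
      moreover have "s2 \<notin> I" using I_down[of a2 s2] s2 A by blast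
      moreover have "le i1 s2" using p_trans[of i1 a1 a2] p_trans[of i1 a2 s2] i1 s2 A by blast
      ultimately have iB: "Some (i1, s2) \<in> B" using B_Some s2 by blast
      show ?thesis
      proof (rule bexI[OF _ iB], intro conjI ballI impI)
        show "bl (Some (i1, s2)) a" "bl (Some (i1, s2)) b" using ab' i1 s2 by (auto simp: bl_Some prod_le_def)
        fix u assume u: "u \<in> B" "bl u a \<and> bl u b"
        show "bl u (Some (i1, s2))"
        proof (cases u)
          case (Some p)
          obtain u1 u2 where p: "p = (u1, u2)" by fastforce
          show ?thesis using u Some p ab' i1 s2 B_Some I_sub by (auto simp: bl_Some prod_le_def)
        next
          case None then show ?thesis using u ab' by simp
        qed
      qed
    qed
  qed
qed

end

theorem lemma1:
  fixes S :: "'a set" and le :: "'a \<Rightarrow> 'a \<Rightarrow> bool" and I :: "'a set"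
  assumes bnd: "bounded_poset S le"
    and fl: "finite_length S le"
    and ideal: "proper_ideal S le I"
  shows
    "(finite_length (bier_carrier S le I) (bier_le le)
      \<and> plength (bier_carrier S le I) (bier_le le) = plength S le)
     \<and> (graded (bier_carrier S le I) (bier_le le) \<longleftrightarrow> graded S le)
     \<and> (graded S le \<longrightarrow> (\<forall>x y. x \<in> I \<and> y \<in> S - I \<and> le x y \<longrightarrow>
           prank (bier_carrier S le I) (bier_le le) (Some (x, y))
             = prank S le x + (plength S le - prank S le y)))
     \<and> (\<forall>x y. Some (x, y) \<in> bier_carrier S le I \<longrightarrow>
           poset_iso (interval (bier_carrier S le I) (bier_le le) (Some (x, y)) None) (bier_le le)
                     (bier_carrier (interval S le x y) le (I \<inter> interval S le x y)) (bier_le le))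
     \<and> (\<forall>x' y' x y. Some (x', y') \<in> bier_carrier S le I \<and> Some (x, y) \<in> bier_carrier S le I
           \<and> bier_le le (Some (x', y')) (Some (x, y)) \<longrightarrow>
           poset_iso (interval (bier_carrier S le I) (bier_le le) (Some (x', y')) (Some (x, y))) (bier_le le)
                     (interval S le x' x \<times> interval S le y y') (prod_le le (\<lambda>a b. le b a)))
     \<and> (is_lattice S le \<longrightarrow> is_lattice (bier_carrier S le I) (bier_le le))"
proof -
  interpret bier_ctx S le I using assms by unfold_locales
  show ?thesis using part1 part2 part2b part3a part3b part4 by blast
qed

end
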